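(* For any permutation $\sigma\in\mathrm{Sym}(n)$, the cyclic group $G=\langle\sigma\rangle\leq\mathrm{Sym}(n)$, with its natural action on $\{1,\dots,n\}$, has the strict EKR property.
   Context: Two permutations $\pi,\tau\in G$ intersect if $\pi\tau^{-1}$ has a fixed point in $\{1,\dots,n\}$. A subset of $G$ is intersecting if every pair of its elements intersect. $G$ has the EKR property if every intersecting subset of $G$ has size at most the size of the largest point-stabilizer in $G$. $G$ has the strict EKR property if it has the EKR property and the only intersecting subsets of maximum size in $G$ are the cosets of the (largest) point-stabilizers. *)

theory Defs
  imports "HOL-Combinatorics.Permutations"
begin

text \<open>Permutation groups are sets of permutations of {1..n}, i.e. functions
  nat \<Rightarrow> nat that permute {1..n} (and fix everything outside).\<close>

definition perm_intersect :: "nat \<Rightarrow> (nat \<Rightarrow> nat) \<Rightarrow> (nat \<Rightarrow> nat) \<Rightarrow> bool" where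
  "perm_intersect n \<pi> \<tau> \<longleftrightarrow> (\<exists>i\<in>{1..n}. (\<pi> \<circ> inv \<tau>) i = i)"

definition intersecting :: "nat \<Rightarrow> (nat \<Rightarrow> nat) set \<Rightarrow> bool" where
  "intersecting n S \<longleftrightarrow> (\<forall>\<pi>\<in>S. \<forall>\<tau>\<in>S. perm_intersect n \<pi> \<tau>)"

definition stab :: "(nat \<Rightarrow> nat) set \<Rightarrow> nat \<Rightarrow> (nat \<Rightarrow> nat) set" where
  "stab G i = {g \<in> G. g i = i}"

definition max_stab_size :: "nat \<Rightarrow> (nat \<Rightarrow> nat) set \<Rightarrow> nat" where
  "max_stab_size n G = Max ((\<lambda>i. card (stab G i)) ` {1..n})"

definition EKR :: "nat \<Rightarrow> (nat \<Rightarrow> nat) set \<Rightarrow> bool" where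
  "EKR n G \<longleftrightarrow> (\<forall>S. S \<subseteq> G \<and> intersecting n S \<longrightarrow> card S \<le> max_stab_size n G)"

text \<open>Cosets of point-stabilizers: g G_i (left cosets); note G_i g = g G_(inv g i),
  so right cosets are covered as well.\<close>
definition strict_EKR :: "nat \<Rightarrow> (nat \<Rightarrow> nat) set \<Rightarrow> bool" where
  "strict_EKR n G \<longleftrightarrow> EKR n G \<and>
     (\<forall>S. S \<subseteq> G \<and> intersecting n S \<and> card S = max_stab_size n G \<longrightarrow>
        (\<exists>g\<in>G. \<exists>i\<in>{1..n}. card (stab G i) = max_stab_size n G \<and>
            S = (\<lambda>h. g \<circ> h) ` stab G i))"

definition cyclic_perm_group :: "(nat \<Rightarrow> nat) \<Rightarrow> (nat \<Rightarrow> nat) set" where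
  "cyclic_perm_group \<sigma> = {\<sigma> ^^ k | k. True}"

end

theory Submission
  imports Defs
begin

lemma funpow_permutes: "s permutes A \<Longrightarrow> (s ^^ k) permutes A"
  by (induction k) (auto intro: permutes_compose permutes_id)

lemma pi_conv:
  assumes "\<tau> permutes {1..n}"
  shows "perm_intersect n \<pi> \<tau> \<longleftrightarrow> (\<exists>j\<in>{1..n}. \<pi> j = \<tau> j)"
proof
  assume "perm_intersect n \<pi> \<tau>"
  then obtain i where i: "i \<in> {1..n}" "\<pi> (inv \<tau> i) = i"
    unfolding perm_intersect_def by auto
  have "inv \<tau> i \<in> {1..n}" using permutes_in_image[OF permutes_inv[OF assms]] i(1) by simp
  moreover have "\<tau> (inv \<tau> i) = i" using permutes_inverses[OF assms] by simp
  moreover have "\<pi> (inv \<tau> i) = \<tau> (inv \<tau> i)" using i(2) calculation(2) by simp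
  ultimately show "\<exists>j\<in>{1..n}. \<pi> j = \<tau> j" by blast
next
  assume "\<exists>j\<in>{1..n}. \<pi> j = \<tau> j"
  then obtain j where j: "j \<in> {1..n}" "\<pi> j = \<tau> j" by auto
  have "\<tau> j \<in> {1..n}" using permutes_in_image[OF assms] j(1) by simp
  moreover have "inv \<tau> (\<tau> j) = j" using permutes_inverses[OF assms] by simp
  ultimately have "(\<pi> \<circ> inv \<tau>) (\<tau> j) = \<tau> j" using j(2) by simp
  then show "perm_intersect n \<pi> \<tau>" unfolding perm_intersect_def
    using \<open>\<tau> j \<in> {1..n}\<close> by blast
qed

lemma cancel_right:
  assumes "surj g" "f \<circ> g = h \<circ> g" shows "f = h"
proof
  fix x obtain y where y: "x = g y" using assms(1) by (metis surjD)
  have "(f \<circ> g) y = (h \<circ> g) y" using assms(2) by simp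
  thus "f x = h x" using y by simp
qed

theorem theorem5:
  fixes n :: nat and \<sigma> :: "nat \<Rightarrow> nat"
  assumes "n \<ge> 1" and "\<sigma> permutes {1..n}"
  shows "strict_EKR n (cyclic_perm_group \<sigma>)"
proof -
  define A where "A = {1..n::nat}"
  define G where "G = cyclic_perm_group \<sigma>"
  have sA: "\<sigma> permutes A" using assms A_def by simp
  have Gdef: "G = range (\<lambda>k. \<sigma> ^^ k)" unfolding G_def cyclic_perm_group_def by auto
  have Gperm: "g permutes A" if "g \<in> G" for g using that Gdef funpow_permutes[OF sA] by auto
  have finG: "finite G"
    by (rule finite_subset[OF _ finite_permutations[of A]]) (use Gperm A_def in auto)
  have surjp: "surj (\<sigma> ^^ k)" for k using funpow_permutes[OF sA] permutes_surj by blast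
  have injp: "inj (\<sigma> ^^ k)" for k using funpow_permutes[OF sA] permutes_inj by blast
  obtain a b where ab: "a < b" "\<sigma> ^^ a = \<sigma> ^^ b"
  proof -
    have "\<not> inj (\<lambda>k. \<sigma> ^^ k)"
    proof
      assume "inj (\<lambda>k::nat. \<sigma> ^^ k)"
      moreover have "finite (range (\<lambda>k::nat. \<sigma> ^^ k))" using finG Gdef by simp
      ultimately have "finite (UNIV :: nat set)" using finite_imageD by blast
      then show False by simp
    qed
    then obtain x y where "x \<noteq> y" "\<sigma> ^^ x = \<sigma> ^^ y" unfolding inj_def by blast
    then show ?thesis
    proof (cases "x < y")
      case True then show ?thesis using that \<open>\<sigma> ^^ x = \<sigma> ^^ y\<close> by blast
    next
      case False then have "y < x" using \<open>x \<noteq> y\<close> by simp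
      then show ?thesis using that[of y x] \<open>\<sigma> ^^ x = \<sigma> ^^ y\<close> by metis
    qed
  qed
  have "\<sigma> ^^ (b - a) \<circ> \<sigma> ^^ a = \<sigma> ^^ b"
    using ab(1) by (simp add: funpow_add[symmetric])
  then have "\<sigma> ^^ (b - a) \<circ> \<sigma> ^^ a = id \<circ> \<sigma> ^^ a" using ab(2) by (simp only: id_comp)
  then have idm: "\<sigma> ^^ (b - a) = id" by (rule cancel_right[OF surjp])
  have "(1::nat) \<in> A" using assms(1) A_def by simp
  then have exl: "\<exists>k. k > 0 \<and> (\<exists>j\<in>A. (\<sigma> ^^ k) j = j)"
    using ab(1) idm by (intro exI[of _ "b - a"]) (metis id_apply zero_less_diff)
  define l where "l = (LEAST k. k > 0 \<and> (\<exists>j\<in>A. (\<sigma> ^^ k) j = j))"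
  have l: "l > 0" "\<exists>j\<in>A. (\<sigma> ^^ l) j = j"
    using LeastI_ex[OF exl] l_def by auto
  have lmin: "(\<sigma> ^^ k) j \<noteq> j" if "0 < k" "k < l" "j \<in> A" for k j
    using not_less_Least[of k "\<lambda>k. k > 0 \<and> (\<exists>j\<in>A. (\<sigma> ^^ k) j = j)"] that l_def by auto
  obtain i0 where i0: "i0 \<in> A" "(\<sigma> ^^ l) i0 = i0" using l by blast
  have powl: "(\<sigma> ^^ (l * q)) i0 = i0" for q
  proof (induction q)
    case (Suc q)
    have "\<sigma> ^^ (l * Suc q) = \<sigma> ^^ l \<circ> \<sigma> ^^ (l * q)" by (simp add: funpow_add[symmetric])
    then show ?case using Suc i0 by simp
  qed simp
  have decomp: "\<sigma> ^^ k = \<sigma> ^^ (l * (k div l)) \<circ> \<sigma> ^^ (k mod l)" for k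
    by (simp add: funpow_add[symmetric])
  define St where "St = stab G i0"
  have St_char: "St = {\<sigma> ^^ (l * q) | q. True}"
  proof -
    have "\<sigma> ^^ k \<in> {\<sigma> ^^ (l * q) | q. True}" if "(\<sigma> ^^ k) i0 = i0" for k
    proof -
      have "(\<sigma> ^^ (l * (k div l))) ((\<sigma> ^^ (k mod l)) i0) = (\<sigma> ^^ (l * (k div l))) i0"
        using that powl decomp[of k] by (metis comp_apply)
      then have "(\<sigma> ^^ (k mod l)) i0 = i0" using injp[unfolded inj_def] by blast
      then have "k mod l = 0" using lmin[of "k mod l" i0] i0 l(1) by fastforce
      then have "\<sigma> ^^ k = \<sigma> ^^ (l * (k div l))" using decomp[of k] by simp
      then show ?thesis by blast
    qed
    then show ?thesis unfolding St_def stab_def Gdef using powl by auto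
  qed
  define T where "T = (\<lambda>k. \<sigma> ^^ k) ` {..<l}"
  have cardT: "card T = l"
  proof -
    have "inj_on (\<lambda>k. \<sigma> ^^ k) {..<l}"
    proof (rule inj_onI, rule ccontr)
      fix x y assume xy: "x \<in> {..<l}" "y \<in> {..<l}" "\<sigma> ^^ x = \<sigma> ^^ y" "x \<noteq> y"
      have gen: False if "x' < y'" "y' < l" "\<sigma> ^^ x' = \<sigma> ^^ y'" for x' y'
      proof -
        have "\<sigma> ^^ (y' - x') \<circ> \<sigma> ^^ x' = \<sigma> ^^ y'"
          using that(1) by (simp add: funpow_add[symmetric])
        then have "\<sigma> ^^ (y' - x') \<circ> \<sigma> ^^ x' = id \<circ> \<sigma> ^^ x'" using that(3) by simp
        then have "\<sigma> ^^ (y' - x') = id" by (rule cancel_right[OF surjp])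
        moreover have "(\<sigma> ^^ (y' - x')) i0 \<noteq> i0" by (rule lmin) (use that i0 in auto)
        ultimately show False by simp
      qed
      show False
      proof (cases "x < y")
        case True then show ?thesis using xy gen by auto
      next
        case False then have "y < x" using xy by simp
        then show ?thesis using xy gen[of y x] by auto
      qed
    qed
    then show ?thesis unfolding T_def by (simp add: card_image)
  qed
  have TG: "T \<subseteq> G" unfolding T_def Gdef by auto
  have StG: "St \<subseteq> G" unfolding St_def stab_def by auto
  have G_sub: "G \<subseteq> (\<lambda>(s,t). s \<circ> t) ` (St \<times> T)"
  proof
    fix g assume "g \<in> G"
    then obtain k where k: "g = \<sigma> ^^ k" using Gdef by auto
    have "\<sigma> ^^ (k mod l) \<in> T" unfolding T_def using l(1) by auto
    moreover have "\<sigma> ^^ (l * (k div l)) \<in> St" unfolding St_char by auto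
    ultimately show "g \<in> (\<lambda>(s,t). s \<circ> t) ` (St \<times> T)" using k decomp[of k] by force
  qed
  have finSt: "finite St" using StG finG finite_subset by blast
  have cardG: "card G \<le> card St * l"
  proof -
    have "card G \<le> card ((\<lambda>(s,t). s \<circ> t) ` (St \<times> T))"
      using G_sub by (intro card_mono) (auto intro: finite_imageI simp: finSt T_def)
    also have "\<dots> \<le> card (St \<times> T)" by (rule card_image_le) (simp add: finSt T_def)
    also have "\<dots> = card St * l" using cardT by (simp add: card_cartesian_product)
    finally show ?thesis .
  qed
  have inter_conv: "\<exists>j\<in>A. s j = s' j" if "intersecting n S" "s \<in> S" "s' \<in> S" "S \<subseteq> G" for S s s'
    using that pi_conv[of s' n s] Gperm A_def unfolding intersecting_def by auto
  have noshift: False if ns: "S \<subseteq> G" "intersecting n S" "s \<in> S" "s' \<in> S" "s = s' \<circ> \<sigma> ^^ d"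
    "0 < d" "d < l" for S s s' d
  proof -
    obtain j where j: "j \<in> A" "s j = s' j" using inter_conv ns by blast
    have "s' ((\<sigma> ^^ d) j) = s' j" using j ns(5) by simp
    moreover have "inj s'" using ns Gperm permutes_inj by blast
    ultimately have "(\<sigma> ^^ d) j = j" by (simp add: inj_def)
    then show False using lmin[OF ns(6) ns(7) j(1)] by simp
  qed
  have inj_prod: "inj_on (\<lambda>(s,t). s \<circ> t) (S \<times> T)" if "S \<subseteq> G" "intersecting n S" for S
  proof (rule inj_onI, clarify)
    fix s t s' t' assume as: "s \<in> S" "t \<in> T" "s' \<in> S" "t' \<in> T" "s \<circ> t = s' \<circ> t'"
    obtain a where a: "a < l" "t = \<sigma> ^^ a" using as T_def by auto
    obtain b where b: "b < l" "t' = \<sigma> ^^ b" using as T_def by auto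
    have gen: "s = s'" if "s \<in> S" "s' \<in> S" "s \<circ> \<sigma> ^^ a = s' \<circ> \<sigma> ^^ b" "a \<le> b" "b < l" for s s' a b
    proof -
      have "\<sigma> ^^ (b - a) \<circ> \<sigma> ^^ a = \<sigma> ^^ b"
        using that(4) by (simp add: funpow_add[symmetric])
      then have "s \<circ> \<sigma> ^^ a = (s' \<circ> \<sigma> ^^ (b - a)) \<circ> \<sigma> ^^ a"
        using that(3) by (simp add: comp_assoc)
      then have e: "s = s' \<circ> \<sigma> ^^ (b - a)" by (rule cancel_right[OF surjp])
      show ?thesis
      proof (cases "a = b")
        case True then show ?thesis using e by simp
      next
        case False
        have "b - a < l" "0 < b - a" using False that(4,5) by auto
        then show ?thesis using noshift[of S s s' "b - a"] e that(1,2) \<open>S \<subseteq> G\<close> \<open>intersecting n S\<close> by blast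
      qed
    qed
    have "s = s'"
    proof (cases "a \<le> b")
      case True
      have "s \<circ> \<sigma> ^^ a = s' \<circ> \<sigma> ^^ b" using as(5) a(2) b(2) by simp
      then show ?thesis using gen[of s s' a b] as(1,3) True b(1) by blast
    next
      case False
      have "s' \<circ> \<sigma> ^^ b = s \<circ> \<sigma> ^^ a" using as(5) a(2) b(2) by simp
      then show ?thesis using gen[of s' s b a] as(1,3) False a(1) by simp
    qed
    moreover have "inj s'" using as \<open>S \<subseteq> G\<close> Gperm permutes_inj by blast
    ultimately have "t = t'" using as(5) by (auto simp: fun_eq_iff inj_def)
    with \<open>s = s'\<close> show "s = s' \<and> t = t'" by simp
  qed
  have Sinter_stab: "intersecting n (stab G i)" if "i \<in> A" for i
    unfolding intersecting_def
  proof (intro ballI)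
    fix h h' assume hh: "h \<in> stab G i" "h' \<in> stab G i"
    then have "h' permutes {1..n}" using Gperm A_def unfolding stab_def by auto
    moreover have "h i = h' i" using hh unfolding stab_def by auto
    ultimately show "perm_intersect n h h'" using pi_conv that A_def by blast
  qed
  have bound: "card S \<le> card St" if "S \<subseteq> G" "intersecting n S" for S
  proof -
    have finS: "finite S" using that finG finite_subset by blast
    have finT: "finite T" unfolding T_def by simp
    have "card S * l = card (S \<times> T)" using cardT by (simp add: card_cartesian_product)
    also have "\<dots> = card ((\<lambda>(s,t). s \<circ> t) ` (S \<times> T))"
      using card_image[OF inj_prod[OF that]] by simp
    also have "\<dots> \<le> card G"
    proof (rule card_mono[OF finG])
      show "(\<lambda>(s,t). s \<circ> t) ` (S \<times> T) \<subseteq> G"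
      proof clarify
        fix s t
        assume st0: "s \<in> S" "t \<in> T"
        have "s \<in> G" using st0 that(1) by blast
        then obtain a where "s = \<sigma> ^^ a" using Gdef by auto
        moreover obtain b where "t = \<sigma> ^^ b" using st0 T_def by auto
        ultimately have "s \<circ> t = \<sigma> ^^ (a + b)" by (simp add: funpow_add)
        then show "s \<circ> t \<in> G" using Gdef by simp
      qed
    qed
    also have "\<dots> \<le> card St * l" by (rule cardG)
    finally show ?thesis using l(1) by simp
  qed
  have maxeq: "max_stab_size n G = card St"
    unfolding max_stab_size_def
  proof (rule Max_eqI)
    show "finite ((\<lambda>i. card (stab G i)) ` {1..n})" by simp
    show "card St \<in> (\<lambda>i. card (stab G i)) ` {1..n}" using i0 A_def St_def by auto
    fix y assume "y \<in> (\<lambda>i. card (stab G i)) ` {1..n}"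
    then obtain i where "i \<in> A" "y = card (stab G i)" using A_def by auto
    moreover have "stab G i \<subseteq> G" unfolding stab_def by auto
    ultimately show "y \<le> card St" using bound Sinter_stab by blast
  qed
  have EKR: "EKR n G" unfolding EKR_def maxeq using bound by blast
  have strict: "\<exists>g\<in>G. \<exists>i\<in>{1..n}. card (stab G i) = max_stab_size n G \<and>
            S = (\<lambda>h. g \<circ> h) ` stab G i"
    if S: "S \<subseteq> G" "intersecting n S" "card S = max_stab_size n G" for S
  proof -
    have cS: "card S = card St" using S(3) maxeq by simp
    have finS: "finite S" using S finG finite_subset by blast
    have finT: "finite T" unfolding T_def by simp
    let ?P = "(\<lambda>(s,t). s \<circ> t) ` (S \<times> T)"
    have sub: "?P \<subseteq> G"
    proof clarify
      fix s t
      assume st0: "s \<in> S" "t \<in> T"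
      have "s \<in> G" using st0 S(1) by blast
      then obtain a where "s = \<sigma> ^^ a" using Gdef by auto
      moreover obtain b where "t = \<sigma> ^^ b" using st0 T_def by auto
      ultimately have "s \<circ> t = \<sigma> ^^ (a + b)" by (simp add: funpow_add)
      then show "s \<circ> t \<in> G" using Gdef by simp
    qed
    have "card ?P = card S * l"
      using card_image[OF inj_prod[OF S(1,2)]] cardT by (simp add: card_cartesian_product)
    then have "card G \<le> card ?P" using cardG cS by simp
    then have PG: "?P = G" using card_seteq[OF finG sub] by blast
    have step: "s \<circ> \<sigma> ^^ l \<in> S" if ss: "s \<in> S" for s
    proof -
      obtain k where k: "s = \<sigma> ^^ k" using ss S(1) Gdef by auto
      have "s \<circ> \<sigma> ^^ l \<in> G" using k Gdef by (simp add: funpow_add[symmetric])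
      then have "s \<circ> \<sigma> ^^ l \<in> ?P" using PG by simp
      then obtain s' t where st: "s' \<in> S" "t \<in> T" "s \<circ> \<sigma> ^^ l = s' \<circ> t" by auto
      obtain c where c: "c < l" "t = \<sigma> ^^ c" using st(2) T_def by auto
      show ?thesis
      proof (cases "c = 0")
        case True then show ?thesis using st c by simp
      next
        case False
        have "\<sigma> ^^ (l - c) \<circ> \<sigma> ^^ c = \<sigma> ^^ l"
          using c(1) by (simp add: funpow_add[symmetric])
        then have "(s \<circ> \<sigma> ^^ (l - c)) \<circ> \<sigma> ^^ c = s' \<circ> \<sigma> ^^ c"
          using st(3) c(2) by (simp add: comp_assoc)
        then have e: "s' = s \<circ> \<sigma> ^^ (l - c)" by (rule cancel_right[OF surjp, symmetric])
        have "0 < l - c" "l - c < l" using False c(1) by auto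
        then show ?thesis using noshift[of S s' s "l - c"] e S(1,2) st(1) ss by blast
      qed
    qed
    obtain s where s: "s \<in> S"
    proof -
      have "card St > 0"
      proof -
        have "id \<in> St" unfolding St_char by (intro CollectI exI[of _ 0]) simp
        then show ?thesis using finSt card_gt_0_iff by blast
      qed
      then have "S \<noteq> {}" using cS by auto
      then show ?thesis using that by blast
    qed
    have iter: "s \<circ> \<sigma> ^^ (l * q) \<in> S" for q
    proof (induction q)
      case 0 then show ?case using s by simp
    next
      case (Suc q)
      have "s \<circ> \<sigma> ^^ (l * Suc q) = (s \<circ> \<sigma> ^^ (l * q)) \<circ> \<sigma> ^^ l"
        by (simp add: funpow_add[symmetric] comp_assoc add.commute)
      then show ?case using step[OF Suc] by (simp only:)
    qed
    have sub2: "(\<lambda>h. s \<circ> h) ` St \<subseteq> S" using iter unfolding St_char by auto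
    have injs: "inj s" using s S(1) Gperm permutes_inj by blast
    have "inj_on (\<lambda>h. s \<circ> h) St"
      by (rule inj_onI) (use injs in \<open>auto simp: fun_eq_iff inj_def\<close>)
    then have "card ((\<lambda>h. s \<circ> h) ` St) = card S" using cS card_image by metis
    then have "(\<lambda>h. s \<circ> h) ` St = S" using card_seteq[OF finS sub2] by simp
    moreover have "s \<in> G" using s S(1) by blast
    moreover have "i0 \<in> {1..n}" using i0(1) A_def by simp
    moreover have "card (stab G i0) = max_stab_size n G" using maxeq St_def by simp
    ultimately show ?thesis unfolding St_def by blast
  qed
  have "strict_EKR n G" unfolding strict_EKR_def
  proof (intro conjI allI impI)
    show "EKR n G" by (rule EKR)
    fix S assume "S \<subseteq> G \<and> intersecting n S \<and> card S = max_stab_size n G"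
    then show "\<exists>g\<in>G. \<exists>i\<in>{1..n}. card (stab G i) = max_stab_size n G \<and> S = (\<lambda>h. g \<circ> h) ` stab G i"
      using strict by blast
  qed
  then show ?thesis unfolding G_def .
qed
end
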